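(* Let $G$ be a nearest point graph on $n=pq$ vertices with at least one edge. Then $\rho(G)$ is separable in $\mathbb{C}^p_A\otimes\mathbb{C}^q_B$ if and only if $\Delta(G)=\Delta(G^{\Gamma_B})$.
   Context: A nearest point graph: consider a rectangular lattice of $pq$ points in $p$ rows and $q$ columns, adjacent points in a row or column at distance $1$; the vertex in row $i$, column $j$ is labelled $u_iw_j$. A nearest point graph is a simple graph on these vertices all of whose edges join points at Euclidean distance $1$ or $\sqrt2$, i.e. every edge $\{u_iw_j,u_{i'}w_{j'}\}$ satisfies $(i-i')^2+(j-j')^2\in\{1,2\}$. For a simple graph $G=(V,E)$: $M(G)$ is the adjacency matrix, $\Delta(G)$ the diagonal degree matrix, $L(G)=\Delta(G)-M(G)$, and $\rho(G)=\frac{1}{2|E|}L(G)$. Vertex $u_iw_j$ is identified with $|u_i\rangle\otimes|w_j\rangle$, where $\{|u_i\rangle\}$, $\{|w_j\rangle\}$ are orthonormal bases of $\mathbb{C}^p_A$, $\mathbb{C}^q_B$. The partial transpose $G^{\Gamma_B}=(V,E')$ has $\{u_iw_j,u_kw_l\}\in E'$ iff $\{u_iw_l,u_kw_j\}\in E$. Separable means a convex combination of product states. *)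

theory Defs
  imports Complex_Main
begin

text \<open>Vertices u_i w_j are pairs (i,j) with i < p (row), j < q (column).
  A simple graph is given by its edge set: a set of 2-element vertex sets.\<close>

type_synonym vertex = "nat \<times> nat"

definition grid :: "nat \<Rightarrow> nat \<Rightarrow> vertex set" where
  "grid p q = {..<p} \<times> {..<q}"

definition simple_graph_on :: "vertex set \<Rightarrow> vertex set set \<Rightarrow> bool" where
  "simple_graph_on V E \<longleftrightarrow> (\<forall>e\<in>E. \<exists>u v. u \<noteq> v \<and> u \<in> V \<and> v \<in> V \<and> e = {u, v})"

definition nearest_point_graph :: "nat \<Rightarrow> nat \<Rightarrow> vertex set set \<Rightarrow> bool" where
  "nearest_point_graph p q E \<longleftrightarrow> simple_graph_on (grid p q) E \<and>
     (\<forall>i j i' j'. {(i, j), (i', j')} \<in> E \<longrightarrow>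
        (int i - int i')^2 + (int j - int j')^2 \<in> {1, 2})"

definition degree :: "vertex set set \<Rightarrow> vertex \<Rightarrow> nat" where
  "degree E u = card {v. {u, v} \<in> E}"

definition adj_matrix :: "vertex set set \<Rightarrow> vertex \<Rightarrow> vertex \<Rightarrow> complex" where
  "adj_matrix E u v = (if {u, v} \<in> E then 1 else 0)"

definition degree_matrix :: "vertex set set \<Rightarrow> vertex \<Rightarrow> vertex \<Rightarrow> complex" where
  "degree_matrix E u v = (if u = v then of_nat (degree E u) else 0)"

definition laplacian :: "vertex set set \<Rightarrow> vertex \<Rightarrow> vertex \<Rightarrow> complex" where
  "laplacian E u v = degree_matrix E u v - adj_matrix E u v"

definition rho :: "vertex set set \<Rightarrow> vertex \<Rightarrow> vertex \<Rightarrow> complex" where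
  "rho E u v = laplacian E u v / of_nat (2 * card E)"

definition ptrans_B :: "vertex set set \<Rightarrow> vertex set set" where
  "ptrans_B E = {{(i, j), (k, l)} | i j k l. {(i, l), (k, j)} \<in> E}"

definition density_matrix :: "nat \<Rightarrow> (nat \<Rightarrow> nat \<Rightarrow> complex) \<Rightarrow> bool" where
  "density_matrix n A \<longleftrightarrow>
     (\<forall>i<n. \<forall>j<n. A j i = cnj (A i j)) \<and>
     (\<forall>x :: nat \<Rightarrow> complex. 0 \<le> Re (\<Sum>i<n. \<Sum>j<n. cnj (x i) * A i j * x j)) \<and>
     (\<Sum>i<n. A i i) = 1"

text \<open>Separable in C^p_A \<otimes> C^q_B: a (finite) convex combination of product states.
  The entry of the pq x pq matrix at row u_i w_j, column u_i' w_j' is rho (i,j) (i',j').\<close>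
definition separable :: "nat \<Rightarrow> nat \<Rightarrow> (vertex \<Rightarrow> vertex \<Rightarrow> complex) \<Rightarrow> bool" where
  "separable p q \<rho> \<longleftrightarrow>
     (\<exists>m (w :: nat \<Rightarrow> real) A B.
        (\<forall>k<m. 0 \<le> w k \<and> density_matrix p (A k) \<and> density_matrix q (B k)) \<and>
        (\<Sum>k<m. w k) = 1 \<and>
        (\<forall>i<p. \<forall>j<q. \<forall>i'<p. \<forall>j'<q.
           \<rho> (i, j) (i', j') = (\<Sum>k<m. complex_of_real (w k) * A k i i' * B k j j')))"

end

theory Submission
  imports Defs
begin


definition sepc :: "nat \<Rightarrow> nat \<Rightarrow> (vertex \<Rightarrow> vertex \<Rightarrow> complex) \<Rightarrow> real \<Rightarrow> bool" where
  "sepc p q \<rho> t \<longleftrightarrow>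
     (\<exists>m (w :: nat \<Rightarrow> real) A B.
        (\<forall>k<m. 0 \<le> w k \<and> density_matrix p (A k) \<and> density_matrix q (B k)) \<and>
        (\<Sum>k<m. w k) = t \<and>
        (\<forall>i<p. \<forall>j<q. \<forall>i'<p. \<forall>j'<q.
           \<rho> (i, j) (i', j') = (\<Sum>k<m. complex_of_real (w k) * A k i i' * B k j j')))"

lemma separable_sepc: "separable p q \<rho> \<longleftrightarrow> sepc p q \<rho> 1"
  unfolding separable_def sepc_def by simp

lemma sepc_cong:
  assumes "sepc p q \<rho> t"
    and "\<And>i j i' j'. i < p \<Longrightarrow> j < q \<Longrightarrow> i' < p \<Longrightarrow> j' < q \<Longrightarrow> \<rho> (i,j) (i',j') = \<rho>' (i,j) (i',j')"
  shows "sepc p q \<rho>' t"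
proof -
  obtain m :: nat and w A B where h: "\<forall>k<m. 0 \<le> w k \<and> density_matrix p (A k) \<and> density_matrix q (B k)"
    "(\<Sum>k<m. w k) = t"
    "\<forall>i<p. \<forall>j<q. \<forall>i'<p. \<forall>j'<q. \<rho> (i, j) (i', j') = (\<Sum>k<m. complex_of_real (w k) * A k i i' * B k j j')"
    using assms(1) unfolding sepc_def by blast
  have h3: "\<forall>i<p. \<forall>j<q. \<forall>i'<p. \<forall>j'<q. \<rho>' (i, j) (i', j') = (\<Sum>k<m. complex_of_real (w k) * A k i i' * B k j j')"
    using h(3) assms(2) by simp
  show ?thesis
    unfolding sepc_def
    apply (rule exI[of _ m], rule exI[of _ w], rule exI[of _ A], rule exI[of _ B])
    apply (intro conjI)
      apply (fact h(1))
     apply (fact h(2))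
    apply (fact h3)
    done
qed

lemma sepc_zero: "sepc p q (\<lambda>X Y. 0) 0"
  unfolding sepc_def by (rule exI[of _ 0]) simp

lemma sum_lessThan_add_split:
  fixes f :: "nat \<Rightarrow> 'a::comm_monoid_add"
  shows "(\<Sum>k<m1+m2. f k) = (\<Sum>k<m1. f k) + (\<Sum>k<m2. f (k + m1))"
proof (induction m2)
  case 0 then show ?case by simp
next
  case (Suc m2)
  then show ?case by (simp add: add.commute) (metis add.left_commute)
qed

lemma sepc_add:
  assumes "sepc p q \<rho>1 t1" "sepc p q \<rho>2 t2"
  shows "sepc p q (\<lambda>X Y. \<rho>1 X Y + \<rho>2 X Y) (t1 + t2)"
proof -
  obtain m1 :: nat and w1 A1 B1 where h1: "\<forall>k<m1. 0 \<le> w1 k \<and> density_matrix p (A1 k) \<and> density_matrix q (B1 k)"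
    "(\<Sum>k<m1. w1 k) = t1"
    "\<forall>i<p. \<forall>j<q. \<forall>i'<p. \<forall>j'<q. \<rho>1 (i, j) (i', j') = (\<Sum>k<m1. complex_of_real (w1 k) * A1 k i i' * B1 k j j')"
    using assms(1) unfolding sepc_def by blast
  obtain m2 :: nat and w2 A2 B2 where h2: "\<forall>k<m2. 0 \<le> w2 k \<and> density_matrix p (A2 k) \<and> density_matrix q (B2 k)"
    "(\<Sum>k<m2. w2 k) = t2"
    "\<forall>i<p. \<forall>j<q. \<forall>i'<p. \<forall>j'<q. \<rho>2 (i, j) (i', j') = (\<Sum>k<m2. complex_of_real (w2 k) * A2 k i i' * B2 k j j')"
    using assms(2) unfolding sepc_def by blast
  define w where "w k = (if k < m1 then w1 k else w2 (k - m1))" for k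
  define A where "A k = (if k < m1 then A1 k else A2 (k - m1))" for k
  define B where "B k = (if k < m1 then B1 k else B2 (k - m1))" for k
  have c1: "\<forall>k<m1+m2. 0 \<le> w k \<and> density_matrix p (A k) \<and> density_matrix q (B k)"
  proof (intro allI impI)
    fix k assume "k < m1 + m2"
    then show "0 \<le> w k \<and> density_matrix p (A k) \<and> density_matrix q (B k)"
      using h1(1) h2(1) unfolding w_def A_def B_def by (cases "k < m1") auto
  qed
  have c2: "(\<Sum>k<m1 + m2. w k) = t1 + t2"
    unfolding sum_lessThan_add_split using h1(2) h2(2) by (simp add: w_def)
  have c3: "\<forall>i<p. \<forall>j<q. \<forall>i'<p. \<forall>j'<q. \<rho>1 (i, j) (i', j') + \<rho>2 (i, j) (i', j') =
        (\<Sum>k<m1 + m2. complex_of_real (w k) * A k i i' * B k j j')"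
    unfolding sum_lessThan_add_split using h1(3) h2(3) by (simp add: w_def A_def B_def)
  show ?thesis
    unfolding sepc_def
    apply (rule exI[of _ "m1+m2"], rule exI[of _ w], rule exI[of _ A], rule exI[of _ B])
    apply (intro conjI)
      apply (fact c1)
     apply (fact c2)
    apply (fact c3)
    done
qed

lemma sepc_scale:
  assumes "sepc p q \<rho> t" "0 \<le> c"
  shows "sepc p q (\<lambda>X Y. complex_of_real c * \<rho> X Y) (c * t)"
proof -
  obtain m :: nat and w A B where h: "\<forall>k<m. 0 \<le> w k \<and> density_matrix p (A k) \<and> density_matrix q (B k)"
    "(\<Sum>k<m. w k) = t"
    "\<forall>i<p. \<forall>j<q. \<forall>i'<p. \<forall>j'<q. \<rho> (i, j) (i', j') = (\<Sum>k<m. complex_of_real (w k) * A k i i' * B k j j')"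
    using assms(1) unfolding sepc_def by blast
  show ?thesis
    unfolding sepc_def
    apply (rule exI[of _ m], rule exI[of _ "\<lambda>k. c * w k"], rule exI[of _ A], rule exI[of _ B])
    using h assms(2) by (auto simp: sum_distrib_left mult.assoc)
qed

lemma sepc_single:
  assumes "density_matrix p A" "density_matrix q B" "0 \<le> w"
  shows "sepc p q (\<lambda>X Y. complex_of_real w * A (fst X) (fst Y) * B (snd X) (snd Y)) w"
  unfolding sepc_def
  apply (rule exI[of _ 1], rule exI[of _ "\<lambda>_. w"], rule exI[of _ "\<lambda>_. A"], rule exI[of _ "\<lambda>_. B"])
  using assms by auto

lemma sepc_sum:
  assumes "finite S" "\<And>s. s \<in> S \<Longrightarrow> sepc p q (f s) (t s)"
  shows "sepc p q (\<lambda>X Y. \<Sum>s\<in>S. f s X Y) (\<Sum>s\<in>S. t s)"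
  using assms
proof (induction S rule: finite_induct)
  case empty then show ?case using sepc_zero by simp
next
  case (insert x F)
  have "sepc p q (\<lambda>X Y. f x X Y + (\<Sum>s\<in>F. f s X Y)) (t x + (\<Sum>s\<in>F. t s))"
    using sepc_add[OF insert.prems[of x] insert.IH] insert.prems by auto
  moreover have "(\<lambda>X Y. \<Sum>s\<in>insert x F. f s X Y) = (\<lambda>X Y. f x X Y + (\<Sum>s\<in>F. f s X Y))"
    using insert.hyps by (simp add: sum.insert)
  moreover have "(\<Sum>s\<in>insert x F. t s) = t x + (\<Sum>s\<in>F. t s)"
    using insert.hyps by (simp add: sum.insert)
  ultimately show ?case by simp
qed

definition ind :: "'a \<Rightarrow> 'a \<Rightarrow> real" where
  "ind a x = (if a = x then 1 else 0)"

lemma density_rank1: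
  assumes "0 \<le> c" "c * (\<Sum>i<n. (f i)^2) = 1"
  shows "density_matrix n (\<lambda>i j. complex_of_real (c * f i * f j))"
  unfolding density_matrix_def
proof (intro conjI allI impI)
  fix x :: "nat \<Rightarrow> complex"
  define S where "S = (\<Sum>j<n. complex_of_real (f j) * x j)"
  have "(\<Sum>i<n. \<Sum>j<n. cnj (x i) * complex_of_real (c * f i * f j) * x j)
      = complex_of_real c * (cnj S * S)"
    unfolding S_def
    by (simp add: sum_distrib_left sum_distrib_right cnj_sum mult_ac)
  also have "cnj S * S = complex_of_real ((Re S)^2 + (Im S)^2)"
    by (simp add: complex_eq_iff power2_eq_square) 
  finally show "0 \<le> Re (\<Sum>i<n. \<Sum>j<n. cnj (x i) * complex_of_real (c * f i * f j) * x j)"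
    using assms(1) by simp
next
  have "(\<Sum>i<n. complex_of_real (c * f i * f i)) = complex_of_real (\<Sum>i<n. c * f i * f i)"
    by simp
  also have "(\<Sum>i<n. c * f i * f i) = 1"
    using assms(2) by (simp add: power2_eq_square sum_distrib_left mult.assoc)
  finally show "(\<Sum>i<n. complex_of_real (c * f i * f i)) = 1" by simp
qed simp

lemma sum_ind: "a < (n::nat) \<Longrightarrow> (\<Sum>i<n. ind a i) = 1"
  by (simp add: ind_def)

lemma ind_sq: "(ind a i)^2 = ind a i"
  by (simp add: ind_def)

lemma sum_ind_sq: "a < (n::nat) \<Longrightarrow> (\<Sum>i<n. (ind a i)^2) = 1"
  by (simp add: ind_sq sum_ind)

lemma sum_ind_pm_sq:
  assumes "a < (n::nat)" "c < n" "a \<noteq> c"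
  shows "(\<Sum>i<n. (ind a i + ind c i)^2) = 2" "(\<Sum>i<n. (ind a i - ind c i)^2) = 2"
proof -
  have e: "(ind a i + ind c i)^2 = ind a i + ind c i" "(ind a i - ind c i)^2 = ind a i + ind c i" for i
    using assms(3) by (auto simp: ind_def)
  have "(\<Sum>i<n. ind a i + ind c i) = 2"
    by (simp add: sum.distrib sum_ind assms)
  then show "(\<Sum>i<n. (ind a i + ind c i)^2) = 2" "(\<Sum>i<n. (ind a i - ind c i)^2) = 2"
    unfolding e by auto
qed



lemma edge_in_grid:
  assumes "simple_graph_on (grid p q) E" "{x, y} \<in> E"
  shows "x \<in> grid p q" "y \<in> grid p q" "x \<noteq> y"
proof -
  obtain u v where "u \<noteq> v" "u \<in> grid p q" "v \<in> grid p q" "{x, y} = {u, v}"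
    using assms unfolding simple_graph_on_def by blast
  then show "x \<in> grid p q" "y \<in> grid p q" "x \<noteq> y"
    by (auto simp: doubleton_eq_iff)
qed

lemma finite_grid: "finite (grid p q)"
  by (simp add: grid_def)

lemma finite_E:
  assumes "simple_graph_on (grid p q) E"
  shows "finite E"
proof -
  have "E \<subseteq> Pow (grid p q)"
    using assms unfolding simple_graph_on_def by auto
  then show ?thesis using finite_grid by (meson finite_Pow_iff finite_subset)
qed

lemma mem_ptrans:
  "{v, w} \<in> ptrans_B E \<longleftrightarrow> {(fst v, snd w), (fst w, snd v)} \<in> E"
proof
  assume "{v, w} \<in> ptrans_B E"
  then obtain i j k l where h: "{v, w} = {(i, j), (k, l)}" "{(i, l), (k, j)} \<in> E"
    unfolding ptrans_B_def by blast
  from h(1) have "(v = (i,j) \<and> w = (k,l)) \<or> (v = (k,l) \<and> w = (i,j))"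
    by (auto simp: doubleton_eq_iff)
  then show "{(fst v, snd w), (fst w, snd v)} \<in> E"
    using h(2) by (auto simp: insert_commute)
next
  assume "{(fst v, snd w), (fst w, snd v)} \<in> E"
  then show "{v, w} \<in> ptrans_B E"
    unfolding ptrans_B_def
    by (intro CollectI exI[of _ "fst v"] exI[of _ "snd v"] exI[of _ "fst w"] exI[of _ "snd w"]) auto
qed

definition PP :: "vertex set set \<Rightarrow> (vertex \<times> vertex) set" where
  "PP E = {(x, y). {x, y} \<in> E}"

lemma PP_sub:
  assumes "simple_graph_on (grid p q) E"
  shows "PP E \<subseteq> grid p q \<times> grid p q" "finite (PP E)"
proof -
  show s: "PP E \<subseteq> grid p q \<times> grid p q"
    using edge_in_grid[OF assms] unfolding PP_def by auto
  show "finite (PP E)"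
    by (rule finite_subset[OF s]) (simp add: finite_grid)
qed

lemma sum_if_card:
  "finite S \<Longrightarrow> (\<Sum>x\<in>S. if P x then 1 else (0::real)) = real (card {x\<in>S. P x})"
  by (simp add: sum.inter_filter[symmetric])

lemma finite_nbrs:
  assumes "simple_graph_on (grid p q) E"
  shows "finite {v. {u, v} \<in> E}"
proof -
  have "{v. {u, v} \<in> E} \<subseteq> grid p q" using edge_in_grid(2)[OF assms] by blast
  then show ?thesis using finite_grid finite_subset by blast
qed

lemma card_PP_fst:
  assumes "simple_graph_on (grid p q) E"
  shows "card {pr \<in> PP E. fst pr = a} = degree E a"
proof -
  have "{pr \<in> PP E. fst pr = a} = (\<lambda>y. (a, y)) ` {y. {a, y} \<in> E}"
    unfolding PP_def by auto
  moreover have "inj (\<lambda>y. (a::vertex, y::vertex))" by (auto simp: inj_def)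
  ultimately show ?thesis unfolding degree_def
    by (simp add: card_image inj_on_def)
qed

lemma card_PP_snd:
  assumes "simple_graph_on (grid p q) E"
  shows "card {pr \<in> PP E. snd pr = a} = degree E a"
proof -
  have "{pr \<in> PP E. snd pr = a} = (\<lambda>y. (y, a)) ` {y. {a, y} \<in> E}"
    unfolding PP_def by (auto simp: insert_commute)
  then show ?thesis unfolding degree_def
    by (simp add: card_image inj_on_def)
qed

definition ell :: "vertex \<times> vertex \<Rightarrow> vertex \<Rightarrow> vertex \<Rightarrow> real" where
  "ell pr X Y = (ind (fst pr) X - ind (snd pr) X) * (ind (fst pr) Y - ind (snd pr) Y)"

lemma lap_ell:
  assumes sg: "simple_graph_on (grid p q) E"
  shows "laplacian E a b = complex_of_real ((\<Sum>pr\<in>PP E. ell pr a b) / 2)"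
proof (cases "a = b")
  case True
  have ne: "fst pr \<noteq> snd pr" if "pr \<in> PP E" for pr
  proof -
    from that have "{fst pr, snd pr} \<in> E" unfolding PP_def by (cases pr) auto
    then show ?thesis by (rule edge_in_grid(3)[OF sg])
  qed
  have "(\<Sum>pr\<in>PP E. ell pr a b) = (\<Sum>pr\<in>PP E. (if fst pr = a then 1 else 0) + (if snd pr = a then 1 else 0))"
  proof (rule sum.cong)
    fix pr assume "pr \<in> PP E"
    then have "fst pr \<noteq> snd pr" by (rule ne)
    then show "ell pr a b = (if fst pr = a then 1 else 0) + (if snd pr = a then 1 else 0)"
      using True unfolding ell_def ind_def by (cases "fst pr = a"; cases "snd pr = a") auto
  qed simp
  also have "\<dots> = real (degree E a) + real (degree E a)"
    by (simp add: sum.distrib sum_if_card PP_sub(2)[OF sg] card_PP_fst[OF sg] card_PP_snd[OF sg])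
  finally have "(\<Sum>pr\<in>PP E. ell pr a b) = 2 * real (degree E a)" by simp
  moreover have "{a, a} \<notin> E" using edge_in_grid(3)[OF sg] by blast
  ultimately show ?thesis using True
    by (simp add: laplacian_def degree_matrix_def adj_matrix_def)
next
  case False
  have "(\<Sum>pr\<in>PP E. ell pr a b) = - ((\<Sum>pr\<in>PP E. if pr = (a, b) then 1 else 0) + (\<Sum>pr\<in>PP E. if pr = (b, a) then 1 else 0))"
    unfolding sum.distrib[symmetric] sum_negf[symmetric]
    by (rule sum.cong) (use False in \<open>auto simp: ell_def ind_def\<close>)
  also have "\<dots> = (if {a, b} \<in> E then -2 else 0)"
    using PP_sub(2)[OF sg] by (simp add: sum.delta) (simp add: PP_def insert_commute)
  finally show ?thesis using False
    by (simp add: laplacian_def degree_matrix_def adj_matrix_def)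
qed

lemma card_PP:
  assumes sg: "simple_graph_on (grid p q) E"
  shows "card (PP E) = 2 * card E"
proof -
  define F where "F e = {pr. fst pr \<in> e \<and> snd pr \<in> e \<and> fst pr \<noteq> snd pr}" for e :: "vertex set"
  have "PP E = (\<Union>e\<in>E. F e)"
  proof
    show "PP E \<subseteq> (\<Union>e\<in>E. F e)"
    proof
      fix pr assume "pr \<in> PP E"
      then have "{fst pr, snd pr} \<in> E" unfolding PP_def by (cases pr) auto
      moreover have "fst pr \<noteq> snd pr" by (rule edge_in_grid(3)[OF sg calculation])
      ultimately show "pr \<in> (\<Union>e\<in>E. F e)" unfolding F_def by blast
    qed
    show "(\<Union>e\<in>E. F e) \<subseteq> PP E"
    proof
      fix pr assume "pr \<in> (\<Union>e\<in>E. F e)"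
      then obtain e where e: "e \<in> E" "fst pr \<in> e" "snd pr \<in> e" "fst pr \<noteq> snd pr"
        unfolding F_def by auto
      then obtain u v where "u \<noteq> v" "e = {u, v}"
        using sg unfolding simple_graph_on_def by blast
      then have "e = {fst pr, snd pr}" using e by auto
      then show "pr \<in> PP E" using e(1) unfolding PP_def by (cases pr) auto
    qed
  qed
  moreover have "card (F e) = 2" if "e \<in> E" for e
  proof -
    obtain u v where "u \<noteq> v" "e = {u, v}"
      using sg \<open>e \<in> E\<close> unfolding simple_graph_on_def by blast
    then have "F e = {(u, v), (v, u)}" unfolding F_def by (auto simp: prod_eq_iff)
    then show ?thesis using \<open>u \<noteq> v\<close> by simp
  qed
  moreover have "finite (F e)" if "e \<in> E" for e
    using \<open>\<And>e. e \<in> E \<Longrightarrow> card (F e) = 2\<close>[OF that] card.infinite by fastforce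
  moreover have "F e1 \<inter> F e2 = {}" if "e1 \<in> E" "e2 \<in> E" "e1 \<noteq> e2" for e1 e2
  proof -
    obtain u v where uv: "u \<noteq> v" "e1 = {u, v}"
      using sg \<open>e1 \<in> E\<close> unfolding simple_graph_on_def by blast
    obtain u' v' where uv': "u' \<noteq> v'" "e2 = {u', v'}"
      using sg \<open>e2 \<in> E\<close> unfolding simple_graph_on_def by blast
    show ?thesis using uv uv' that(3) unfolding F_def by auto
  qed
  ultimately show ?thesis
    using finite_E[OF sg] by (simp add: card_UN_disjoint)
qed



lemma int_unit_sq:
  "(a::int) \<noteq> 0 \<Longrightarrow> b \<noteq> 0 \<Longrightarrow> a^2 + b^2 \<in> {1,2} \<Longrightarrow> (a = 1 \<or> a = -1) \<and> (b = 1 \<or> b = -1)"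
  by (smt (verit, del_insts) insert_iff power2_eq_1_iff singletonD zero_less_power_eq_numeral)

definition good :: "vertex set set \<Rightarrow> vertex \<Rightarrow> vertex \<Rightarrow> bool" where
  "good E x y \<longleftrightarrow> ({x, y} \<in> E \<longleftrightarrow> {(fst x, snd y), (fst y, snd x)} \<in> E)"

lemma good_triv: "fst x = fst y \<or> snd x = snd y \<Longrightarrow> good E x y"
  unfolding good_def by (cases x; cases y) (auto simp: insert_commute)

lemma good_sym: "good E x y = good E y x"
  unfolding good_def by (simp add: insert_commute)

lemma good_swap: "good E x y = good E (fst x, snd y) (fst y, snd x)"
  unfolding good_def by (auto simp: insert_commute)

lemma npg_dist:
  assumes "nearest_point_graph p q E" "{x, y} \<in> E"
  shows "(int (fst x) - int (fst y))^2 + (int (snd x) - int (snd y))^2 \<in> {1, 2}"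
proof -
  have "{(fst x, snd x), (fst y, snd y)} \<in> E" using assms(2) by simp
  then show ?thesis using assms(1) unfolding nearest_point_graph_def by blast
qed

lemma bad_unit:
  assumes npg: "nearest_point_graph p q E" and bad: "\<not> good E x y"
  shows "(fst y = fst x + 1 \<or> fst x = fst y + 1) \<and> (snd y = snd x + 1 \<or> snd x = snd y + 1)"
proof -
  have ne: "fst x \<noteq> fst y" "snd x \<noteq> snd y" using good_triv bad by blast+
  have "(int (fst x) - int (fst y))^2 + (int (snd x) - int (snd y))^2 \<in> {1, 2}"
  proof (cases "{x, y} \<in> E")
    case True then show ?thesis using npg_dist[OF npg] by blast
  next
    case False
    then have "{(fst x, snd y), (fst y, snd x)} \<in> E" using bad unfolding good_def by blast
    from npg_dist[OF npg this] have "(int (fst x) - int (fst y))^2 + (int (snd y) - int (snd x))^2 \<in> {1, 2}"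
      by simp
    moreover have "(int (snd y) - int (snd x))^2 = (int (snd x) - int (snd y))^2"
      by (simp add: power2_commute)
    ultimately show ?thesis by simp
  qed
  moreover have "int (fst x) - int (fst y) \<noteq> 0" "int (snd x) - int (snd y) \<noteq> 0" using ne by auto
  ultimately have "(int (fst x) - int (fst y) = 1 \<or> int (fst x) - int (fst y) = -1) \<and>
      (int (snd x) - int (snd y) = 1 \<or> int (snd x) - int (snd y) = -1)"
    using int_unit_sq by blast
  then show ?thesis by linarith
qed

lemma degree_eq_imp_good:
  assumes npg: "nearest_point_graph p q E"
    and deq: "\<And>v. degree E v = degree (ptrans_B E) v"
  shows "good E x y"
proof (rule ccontr)
  assume "\<not> good E x y"
  define \<mu> where "\<mu> x y = min (fst x) (fst y) + min (snd x) (snd y)" for x y :: vertex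
  have sg: "simple_graph_on (grid p q) E" using npg unfolding nearest_point_graph_def by blast
  have "\<exists>n. \<exists>x y. \<not> good E x y \<and> \<mu> x y = n" using \<open>\<not> good E x y\<close> by blast
  then obtain n where "\<exists>x y. \<not> good E x y \<and> \<mu> x y = n"
      and nmin: "\<And>m. m < n \<Longrightarrow> \<not> (\<exists>x y. \<not> good E x y \<and> \<mu> x y = m)"
    unfolding exists_least_iff[of "\<lambda>n. \<exists>x y. \<not> good E x y \<and> \<mu> x y = n"] by blast
  then obtain x0 y0 where bad0: "\<not> good E x0 y0" and n0: "\<mu> x0 y0 = n" by blast
  define i where "i = min (fst x0) (fst y0)"
  define j where "j = min (snd x0) (snd y0)"
  define v where "v = (i, j)"
  define w0 where "w0 = (i + 1, j + 1)"
  have nij: "n = i + j" using n0 unfolding \<mu>_def i_def j_def by simp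
  have A: "\<not> good E v w0"
  proof -
    from bad_unit[OF npg bad0] consider
        "fst y0 = fst x0 + 1" "snd y0 = snd x0 + 1"
      | "fst y0 = fst x0 + 1" "snd x0 = snd y0 + 1"
      | "fst x0 = fst y0 + 1" "snd y0 = snd x0 + 1"
      | "fst x0 = fst y0 + 1" "snd x0 = snd y0 + 1" by blast
    then show ?thesis
    proof cases
      case 1
      then have "x0 = v" "y0 = w0" unfolding v_def w0_def i_def j_def by (auto simp: prod_eq_iff)
      then show ?thesis using bad0 by simp
    next
      case 2
      then have "(fst x0, snd y0) = v" "(fst y0, snd x0) = w0"
        unfolding v_def w0_def i_def j_def by auto
      then show ?thesis using bad0 good_swap[of E x0 y0] by simp
    next
      case 3
      then have "(fst x0, snd y0) = w0" "(fst y0, snd x0) = v"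
        unfolding v_def w0_def i_def j_def by auto
      then show ?thesis using bad0 good_swap[of E x0 y0] good_sym[of E v w0] by simp
    next
      case 4
      then have "x0 = w0" "y0 = v" unfolding v_def w0_def i_def j_def by (auto simp: prod_eq_iff)
      then show ?thesis using bad0 good_sym[of E v w0] by simp
    qed
  qed
  have B: "good E v w" if "w \<noteq> w0" for w
  proof (rule ccontr)
    assume nb: "\<not> good E v w"
    have "\<not> \<mu> v w < n" using nmin nb by blast
    then have ge: "min i (fst w) + min j (snd w) \<ge> i + j" unfolding \<mu>_def v_def nij by simp
    have "(fst w = i + 1 \<or> i = fst w + 1) \<and> (snd w = j + 1 \<or> j = snd w + 1)"
      using bad_unit[OF npg nb] unfolding v_def by simp
    with ge have "fst w = i + 1" "snd w = j + 1" by linarith+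
    then have "w = w0" unfolding w0_def by (simp add: prod_eq_iff)
    with that show False by simp
  qed
  define S where "S = {w. {v, w} \<in> E}"
  define S' where "S' = {w. {(i, snd w), (fst w, j)} \<in> E}"
  have dS: "degree E v = card S" unfolding S_def degree_def by simp
  have dS': "degree (ptrans_B E) v = card S'"
    unfolding S'_def degree_def mem_ptrans v_def by simp
  have fS: "finite S" unfolding S_def by (rule finite_nbrs[OF sg])
  have "S' \<subseteq> grid p q"
  proof
    fix w assume "w \<in> S'"
    then have "{(i, snd w), (fst w, j)} \<in> E" unfolding S'_def by simp
    then have "(i, snd w) \<in> grid p q" "(fst w, j) \<in> grid p q"
      using edge_in_grid[OF sg] by blast+
    then show "w \<in> grid p q" unfolding grid_def by (cases w) auto
  qed
  then have fS': "finite S'" using finite_grid finite_subset by blast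
  have same: "w \<in> S \<longleftrightarrow> w \<in> S'" if "w \<noteq> w0" for w
    using B[OF that] unfolding good_def S_def S'_def v_def by simp
  have diff: "w0 \<in> S \<longleftrightarrow> w0 \<notin> S'"
    using A unfolding good_def S_def S'_def v_def by auto
  show False
  proof (cases "w0 \<in> S")
    case True
    have "S = insert w0 S'"
    proof (rule set_eqI)
      fix w show "w \<in> S \<longleftrightarrow> w \<in> insert w0 S'" using same[of w] True by (cases "w = w0") auto
    qed
    then have "card S = Suc (card S')" using diff True fS' by simp
    then show False using deq[of v] dS dS' by simp
  next
    case False
    have "S' = insert w0 S"
    proof (rule set_eqI)
      fix w show "w \<in> S' \<longleftrightarrow> w \<in> insert w0 S" using same[of w] False diff by (cases "w = w0") auto
    qed
    then have "card S' = Suc (card S)" using diff False fS by simp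
    then show False using deq[of v] dS dS' by simp
  qed
qed

lemma degree_eq_imp_PT:
  assumes npg: "nearest_point_graph p q E"
    and deq: "\<And>v. degree E v = degree (ptrans_B E) v"
    and "{x, y} \<in> E"
  shows "{(fst x, snd y), (fst y, snd x)} \<in> E"
  using degree_eq_imp_good[OF npg deq, of x y] assms(3) unfolding good_def by blast



definition sig :: "vertex \<times> vertex \<Rightarrow> vertex \<times> vertex" where
  "sig pr = ((fst (fst pr), snd (snd pr)), (fst (snd pr), snd (fst pr)))"

lemma sig_pair: "sig ((a, b), (c, d)) = ((a, d), (c, b))"
  by (simp add: sig_def)

lemma ind_pair: "ind (a, b) (i, j) = ind a i * ind b j"
  by (simp add: ind_def)

lemma ell_pair: "ell ((a, b), (c, d)) (i, j) (i', j') =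
   (ind a i * ind b j - ind c i * ind d j) * (ind a i' * ind b j' - ind c i' * ind d j')"
  by (simp add: ell_def ind_pair)

lemma sum_sig:
  assumes PT: "\<And>x y. {x, y} \<in> E \<Longrightarrow> {(fst x, snd y), (fst y, snd x)} \<in> E"
  shows "(\<Sum>pr\<in>PP E. ell (sig pr) X Y) = (\<Sum>pr\<in>PP E. ell pr X Y)"
proof -
  have h: "sig (sig pr) = pr" "sig pr \<in> PP E" if "pr \<in> PP E" for pr
    using that PT unfolding sig_def PP_def by (cases pr; auto)+
  show ?thesis
    by (rule sum.reindex_bij_witness[of _ sig sig]) (use h in auto)
qed

lemma real_id_gen:
  fixes ua uc ua' uc' sb sd sb' sd' :: real
  shows "(ua * sb - uc * sd) * (ua' * sb' - uc' * sd') + (ua * sd - uc * sb) * (ua' * sd' - uc' * sb')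
    = 2 * ((1/2) * (ua + uc) * (ua' + uc') * ((1/2) * (sb - sd) * (sb' - sd')))
    + 2 * ((1/2) * (ua - uc) * (ua' - uc') * ((1/2) * (sb + sd) * (sb' + sd')))"
  by algebra

lemma real_id_ac:
  fixes ua ua' sb sd sb' sd' :: real
  shows "(ua * sb - ua * sd) * (ua' * sb' - ua' * sd') + (ua * sd - ua * sb) * (ua' * sd' - ua' * sb')
    = 2 * (1 * ua * ua' * ((1/2) * (sb - sd) * (sb' - sd')))
    + 2 * (1 * ua * ua' * ((1/2) * (sb - sd) * (sb' - sd')))"
  by algebra

lemma real_id_bd:
  fixes ua uc ua' uc' sb sb' :: real
  shows "(ua * sb - uc * sb) * (ua' * sb' - uc' * sb') + (ua * sb - uc * sb) * (ua' * sb' - uc' * sb')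
    = 2 * ((1/2) * (ua - uc) * (ua' - uc') * (1 * sb * sb'))
    + 2 * ((1/2) * (ua - uc) * (ua' - uc') * (1 * sb * sb'))"
  by algebra

lemma sepc_two:
  assumes "density_matrix p (\<lambda>i j. complex_of_real (c1 * f1 i * f1 j))"
    "density_matrix q (\<lambda>i j. complex_of_real (d1 * g1 i * g1 j))"
    "density_matrix p (\<lambda>i j. complex_of_real (c2 * f2 i * f2 j))"
    "density_matrix q (\<lambda>i j. complex_of_real (d2 * g2 i * g2 j))"
    and eq: "\<And>i j i' j'. F (i, j) (i', j') =
        2 * (c1 * f1 i * f1 i' * (d1 * g1 j * g1 j')) + 2 * (c2 * f2 i * f2 i' * (d2 * g2 j * g2 j'))"
  shows "sepc p q (\<lambda>X Y. complex_of_real (F X Y)) 4"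
proof -
  have "sepc p q (\<lambda>X Y. complex_of_real 2 * complex_of_real (c1 * f1 (fst X) * f1 (fst Y)) * complex_of_real (d1 * g1 (snd X) * g1 (snd Y))
      + complex_of_real 2 * complex_of_real (c2 * f2 (fst X) * f2 (fst Y)) * complex_of_real (d2 * g2 (snd X) * g2 (snd Y))) (2 + 2)"
    by (rule sepc_add; rule sepc_single) (use assms in simp_all)
  note h0 = this
  have four: "(4::real) = 2 + 2" by simp
  have h: "sepc p q (\<lambda>X Y. complex_of_real 2 * complex_of_real (c1 * f1 (fst X) * f1 (fst Y)) * complex_of_real (d1 * g1 (snd X) * g1 (snd Y))
      + complex_of_real 2 * complex_of_real (c2 * f2 (fst X) * f2 (fst Y)) * complex_of_real (d2 * g2 (snd X) * g2 (snd Y))) 4"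
    using h0 by (simp only: four)
  show ?thesis
    by (rule sepc_cong[OF h]) (simp add: eq mult_ac)
qed

lemma sepc_pair:
  assumes sg: "simple_graph_on (grid p q) E" and pr: "pr \<in> PP E"
  shows "sepc p q (\<lambda>X Y. complex_of_real (ell pr X Y + ell (sig pr) X Y)) 4"
proof -
  obtain a b c d where prd: "pr = ((a, b), (c, d))" by (metis prod.collapse)
  have e: "{(a, b), (c, d)} \<in> E" using pr prd unfolding PP_def by simp
  have ab: "(a, b) \<in> grid p q" and cd: "(c, d) \<in> grid p q" and ne: "(a, b) \<noteq> (c, d)"
    using edge_in_grid[OF sg e] by auto
  then have lt: "a < p" "c < p" "b < q" "d < q" unfolding grid_def by auto
  have sp: "sig pr = ((a, d), (c, b))" unfolding sig_def prd by simp
  have d1: "density_matrix n (\<lambda>i j. complex_of_real (1 * ind u i * ind u j))" if "u < n" for u n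
    by (rule density_rank1) (use sum_ind_sq[OF that] in simp_all)
  have d2p: "density_matrix n (\<lambda>i j. complex_of_real ((1/2) * (ind u i + ind u' i) * (ind u j + ind u' j)))"
    if "u < n" "u' < n" "u \<noteq> u'" for u u' n
  proof -
    have "density_matrix n (\<lambda>i j. complex_of_real ((1/2) * (ind u i + ind u' i) * (ind u j + ind u' j)))"
      by (rule density_rank1[where f="\<lambda>i. ind u i + ind u' i"]) (use sum_ind_pm_sq[OF that] in simp_all)
    then show ?thesis .
  qed
  have d2m: "density_matrix n (\<lambda>i j. complex_of_real ((1/2) * (ind u i - ind u' i) * (ind u j - ind u' j)))"
    if "u < n" "u' < n" "u \<noteq> u'" for u u' n
    by (rule density_rank1[where f="\<lambda>i. ind u i - ind u' i"]) (use sum_ind_pm_sq[OF that] in simp_all)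
  show ?thesis
  proof (cases "a = c")
    case True
    then have "b \<noteq> d" using ne by simp
    show ?thesis
      unfolding prd sig_pair True
      by (rule sepc_two[OF d1[OF lt(2)] d2m[OF lt(3) lt(4) \<open>b \<noteq> d\<close>] d1[OF lt(2)] d2m[OF lt(3) lt(4) \<open>b \<noteq> d\<close>]])
         (simp only: ell_pair real_id_ac)
  next
    case False
    note ac = False
    show ?thesis
    proof (cases "b = d")
      case True
      show ?thesis
        unfolding prd sig_pair True
        by (rule sepc_two[OF d2m[OF lt(1) lt(2) ac] d1[OF lt(4)] d2m[OF lt(1) lt(2) ac] d1[OF lt(4)]])
           (simp only: ell_pair real_id_bd)
    next
      case False
      show ?thesis
        unfolding prd sig_pair
        by (rule sepc_two[OF d2p[OF lt(1) lt(2) ac] d2m[OF lt(3) lt(4) False] d2m[OF lt(1) lt(2) ac] d2p[OF lt(3) lt(4) False]])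
           (simp only: ell_pair real_id_gen)
    qed
  qed
qed



lemma sep_of_PT:
  assumes sg: "simple_graph_on (grid p q) E" and ne: "E \<noteq> {}"
    and PT: "\<And>x y. {x, y} \<in> E \<Longrightarrow> {(fst x, snd y), (fst y, snd x)} \<in> E"
  shows "separable p q (rho E)"
proof -
  have fP: "finite (PP E)" by (rule PP_sub(2)[OF sg])
  have cP: "card (PP E) = 2 * card E" by (rule card_PP[OF sg])
  have cE: "card E > 0" using finite_E[OF sg] ne by (simp add: card_gt_0_iff)
  have s1: "sepc p q (\<lambda>X Y. \<Sum>pr\<in>PP E. complex_of_real (ell pr X Y + ell (sig pr) X Y)) (\<Sum>pr\<in>PP E. 4)"
    by (rule sepc_sum[OF fP]) (rule sepc_pair[OF sg])
  define c where "c = 1 / (4 * real (card (PP E)))"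
  have c0: "0 \<le> c" unfolding c_def by simp
  have s2: "sepc p q (\<lambda>X Y. complex_of_real c * (\<Sum>pr\<in>PP E. complex_of_real (ell pr X Y + ell (sig pr) X Y)))
       (c * (\<Sum>pr\<in>PP E. 4))"
    by (rule sepc_scale[OF s1 c0])
  have w1: "c * (\<Sum>pr\<in>PP E. 4) = 1"
    unfolding c_def using cP cE by simp
  have eq: "complex_of_real c * (\<Sum>pr\<in>PP E. complex_of_real (ell pr X Y + ell (sig pr) X Y)) = rho E X Y" for X Y
  proof -
    have "(\<Sum>pr\<in>PP E. complex_of_real (ell pr X Y + ell (sig pr) X Y))
        = complex_of_real (\<Sum>pr\<in>PP E. ell pr X Y + ell (sig pr) X Y)" by simp
    also have "(\<Sum>pr\<in>PP E. ell pr X Y + ell (sig pr) X Y) = 2 * (\<Sum>pr\<in>PP E. ell pr X Y)"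
      by (simp add: sum.distrib sum_sig[OF PT])
    finally have h: "(\<Sum>pr\<in>PP E. complex_of_real (ell pr X Y + ell (sig pr) X Y))
        = complex_of_real (2 * (\<Sum>pr\<in>PP E. ell pr X Y))" .
    show ?thesis
      unfolding h rho_def lap_ell[OF sg] c_def cP
      using cE by (simp add: field_simps)
  qed
  show ?thesis
    unfolding separable_sepc
    by (rule sepc_cong[OF s2[unfolded w1]]) (simp only: eq)
qed



lemma delta_sum:
  fixes K :: "'a \<Rightarrow> complex"
  assumes I: "finite I" and v: "v \<in> I"
  shows "(\<Sum>i\<in>I. (c1 + c2 * (if i = v then 1 else 0)) * K i) = c1 * (\<Sum>i\<in>I. K i) + c2 * K v"
proof -
  have "(\<Sum>i\<in>I. (c1 + c2 * (if i = v then 1 else 0)) * K i) = (\<Sum>i\<in>I. c1 * K i + c2 * (if i = v then K i else 0))"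
    by (rule sum.cong) (auto simp: algebra_simps)
  also have "\<dots> = c1 * (\<Sum>i\<in>I. K i) + c2 * K v"
    using I v by (simp add: sum.distrib sum_distrib_left[symmetric] sum.delta)
  finally show ?thesis .
qed

lemma quad_expand:
  fixes M :: "'a \<Rightarrow> 'a \<Rightarrow> complex"
  assumes I: "finite I" and v: "v \<in> I"
  shows "(\<Sum>i\<in>I. \<Sum>j\<in>I. (c1 + c2 * (if i = v then 1 else 0)) * (d1 + d2 * (if j = v then 1 else 0)) * M i j)
       = c1 * d1 * (\<Sum>i\<in>I. \<Sum>j\<in>I. M i j) + c1 * d2 * (\<Sum>i\<in>I. M i v) + c2 * d1 * (\<Sum>j\<in>I. M v j) + c2 * d2 * M v v"
proof -
  have inner: "(\<Sum>j\<in>I. (c1 + c2 * (if i = v then 1 else 0)) * (d1 + d2 * (if j = v then 1 else 0)) * M i j)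
     = (c1 + c2 * (if i = v then 1 else 0)) * (d1 * (\<Sum>j\<in>I. M i j) + d2 * M i v)" for i
    by (simp add: mult.assoc sum_distrib_left[symmetric] delta_sum[OF I v])
  have "(\<Sum>i\<in>I. \<Sum>j\<in>I. (c1 + c2 * (if i = v then 1 else 0)) * (d1 + d2 * (if j = v then 1 else 0)) * M i j)
     = c1 * (\<Sum>i\<in>I. d1 * (\<Sum>j\<in>I. M i j) + d2 * M i v) + c2 * (d1 * (\<Sum>j\<in>I. M v j) + d2 * M v v)"
    unfolding inner by (rule delta_sum[OF I v])
  also have "\<dots> = c1 * d1 * (\<Sum>i\<in>I. \<Sum>j\<in>I. M i j) + c1 * d2 * (\<Sum>i\<in>I. M i v) + c2 * d1 * (\<Sum>j\<in>I. M v j) + c2 * d2 * M v v"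
    by (simp add: sum.distrib sum_distrib_left[symmetric] algebra_simps)
  finally show ?thesis .
qed

lemma prod_sum_grid:
  fixes f g :: "nat \<Rightarrow> complex"
  shows "(\<Sum>X\<in>grid p q. f (fst X) * g (snd X)) = (\<Sum>i<p. f i) * (\<Sum>j<q. g j)"
  unfolding grid_def by (simp add: sum_product sum.cartesian_product case_prod_unfold)

lemma cs_real:
  fixes a b N :: real
  assumes "0 \<le> a" "0 \<le> N" "\<And>l r. 0 \<le> l^2 * N * a - 2 * l * r * N + r^2 * b"
  shows "N \<le> a * b"
proof (cases "a = 0")
  case False
  then have "a > 0" using assms(1) by simp
  have "0 \<le> 1^2 * N * a - 2 * 1 * a * N + a^2 * b" using assms(3) .
  then have "0 \<le> a * (a * b - N)" by (simp add: power2_eq_square algebra_simps)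
  then show ?thesis using \<open>a > 0\<close> by (simp add: zero_le_mult_iff)
next
  case True
  show ?thesis
  proof (rule ccontr)
    assume "\<not> N \<le> a * b"
    then have "N > 0" using True by simp
    have "0 \<le> ((b + 1) / N)^2 * N * a - 2 * ((b + 1) / N) * 1 * N + 1^2 * b" using assms(3) .
    then have "0 \<le> - 2 * (b + 1) + b" using True \<open>N > 0\<close> by simp
    moreover have "0 \<le> b" using assms(3)[of 0 1] by simp
    ultimately show False by simp
  qed
qed

lemma final_ineq:
  fixes ar br a2 b2 g1 g2 h1 h2 t :: real
  assumes "0 \<le> ar" "0 \<le> br" "0 \<le> a2" "0 \<le> b2"
    "g1^2 + g2^2 \<le> ar * a2" "h1^2 + h2^2 \<le> br * b2"
  shows "0 \<le> ar * br + 2 * t * (g1 * h1 + g2 * h2) + t^2 * (a2 * b2)"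
proof -
  define X where "X = ar * br"
  define Y where "Y = t^2 * (a2 * b2)"
  define c where "c = t * (g1 * h1 + g2 * h2)"
  have X0: "0 \<le> X" unfolding X_def using assms by simp
  have Y0: "0 \<le> Y" unfolding Y_def using assms by simp
  have "(g1 * h1 + g2 * h2)^2 \<le> (g1^2 + g2^2) * (h1^2 + h2^2)"
  proof -
    have "0 \<le> (g1 * h2 - g2 * h1)^2" by simp
    then show ?thesis by (simp add: power2_eq_square algebra_simps)
  qed
  also have "\<dots> \<le> (ar * a2) * (br * b2)"
    using assms by (intro mult_mono) auto
  finally have k: "(g1 * h1 + g2 * h2)^2 \<le> (ar * a2) * (br * b2)" .
  have "c^2 = t^2 * (g1 * h1 + g2 * h2)^2" unfolding c_def by (simp add: power_mult_distrib)
  also have "\<dots> \<le> t^2 * ((ar * a2) * (br * b2))" by (rule mult_left_mono[OF k]) simp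
  also have "\<dots> = X * Y" unfolding X_def Y_def by (simp add: algebra_simps)
  finally have "c^2 \<le> X * Y" .
  also have "X * Y \<le> ((X + Y) / 2)^2"
  proof -
    have "0 \<le> (X - Y)^2" by simp
    then show ?thesis by (simp add: power2_eq_square field_simps)
  qed
  finally have "c^2 \<le> ((X + Y) / 2)^2" .
  then have "\<bar>c\<bar> \<le> \<bar>(X + Y) / 2\<bar>" by (simp only: abs_le_square_iff)
  then have "- c \<le> (X + Y) / 2" using X0 Y0 by simp
  then show ?thesis unfolding X_def Y_def c_def by simp
qed



lemma dens_quad:
  assumes D: "density_matrix n A" and v: "v < n"
  shows "0 \<le> Re (cnj s1 * s1 * (\<Sum>i<n. \<Sum>j<n. A i j) + cnj s1 * s2 * (\<Sum>i<n. A i v)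
          + cnj s2 * s1 * (\<Sum>j<n. A v j) + cnj s2 * s2 * A v v)"
proof -
  define x where "x i = s1 + s2 * (if i = v then 1 else 0)" for i :: nat
  have psd: "0 \<le> Re (\<Sum>i<n. \<Sum>j<n. cnj (x i) * A i j * x j)"
    using D unfolding density_matrix_def by blast
  have "(\<Sum>i<n. \<Sum>j<n. cnj (x i) * A i j * x j)
      = (\<Sum>i<n. \<Sum>j<n. (cnj s1 + cnj s2 * (if i = v then 1 else 0)) * (s1 + s2 * (if j = v then 1 else 0)) * A i j)"
    unfolding x_def by (intro sum.cong refl) (simp add: mult_ac)
  also have "\<dots> = cnj s1 * s1 * (\<Sum>i<n. \<Sum>j<n. A i j) + cnj s1 * s2 * (\<Sum>i<n. A i v)
          + cnj s2 * s1 * (\<Sum>j<n. A v j) + cnj s2 * s2 * A v v"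
    by (rule quad_expand) (use v in auto)
  finally show ?thesis using psd by simp
qed

lemma dens_cs:
  assumes D: "density_matrix n A" and v: "v < n"
  defines "a1 \<equiv> (\<Sum>i<n. \<Sum>j<n. A i j)" and "g \<equiv> (\<Sum>j<n. A v j)"
  shows "(\<Sum>i<n. A i v) = cnj g" "Im a1 = 0" "Im (A v v) = 0" "0 \<le> Re a1" "0 \<le> Re (A v v)"
    "(Re g)^2 + (Im g)^2 \<le> Re a1 * Re (A v v)"
proof -
  have herm: "\<And>i j. i < n \<Longrightarrow> j < n \<Longrightarrow> A j i = cnj (A i j)"
    using D unfolding density_matrix_def by blast
  show cg: "(\<Sum>i<n. A i v) = cnj g"
    unfolding g_def cnj_sum by (rule sum.cong[OF refl]) (metis herm lessThan_iff v)
  have "cnj a1 = (\<Sum>i<n. \<Sum>j<n. A j i)"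
    unfolding a1_def cnj_sum by (intro sum.cong refl) (metis herm lessThan_iff)
  also have "\<dots> = a1" unfolding a1_def by (rule sum.swap)
  finally have "cnj a1 = a1" .
  then have "Im (cnj a1) = Im a1" by simp
  then show "Im a1 = 0" by simp
  have "cnj (A v v) = A v v" using herm[OF v v] by simp
  then have "Im (cnj (A v v)) = Im (A v v)" by simp
  then show "Im (A v v) = 0" by simp
  have Q: "0 \<le> Re (cnj s1 * s1 * a1 + cnj s1 * s2 * cnj g + cnj s2 * s1 * g + cnj s2 * s2 * A v v)" for s1 s2
    using dens_quad[OF D v, of s1 s2] unfolding cg a1_def g_def by simp
  show a10: "0 \<le> Re a1" using Q[of 1 0] by simp
  show "0 \<le> Re (A v v)" using Q[of 0 1] by simp
  define N where "N = (Re g)^2 + (Im g)^2"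
  have gg: "g * cnj g = complex_of_real N" unfolding N_def by (rule complex_mult_cnj)
  have "0 \<le> l^2 * N * Re a1 - 2 * l * r * N + r^2 * Re (A v v)" for l r
  proof -
    have "cnj (- complex_of_real l * cnj g) * (- complex_of_real l * cnj g) * a1
        + cnj (- complex_of_real l * cnj g) * complex_of_real r * cnj g
        + cnj (complex_of_real r) * (- complex_of_real l * cnj g) * g
        + cnj (complex_of_real r) * complex_of_real r * A v v
      = complex_of_real (l^2) * (g * cnj g) * a1 - 2 * complex_of_real (l * r) * (g * cnj g)
        + complex_of_real (r^2) * A v v"
      by (simp add: algebra_simps power2_eq_square)
    also have "\<dots> = complex_of_real (l^2 * N) * a1 - complex_of_real (2 * l * r * N)
        + complex_of_real (r^2) * A v v"
      unfolding gg by (simp add: algebra_simps)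
    finally show ?thesis using Q[of "- complex_of_real l * cnj g" "complex_of_real r"] by simp
  qed
  then show "(Re g)^2 + (Im g)^2 \<le> Re a1 * Re (A v v)"
    unfolding N_def[symmetric] by (intro cs_real[OF a10]) (auto simp: N_def)
qed



lemma prod_psd:
  assumes DA: "density_matrix p A" and DB: "density_matrix q B" and vG: "v \<in> grid p q"
  shows "0 \<le> Re (\<Sum>X\<in>grid p q. \<Sum>Y\<in>grid p q.
     (1 + complex_of_real t * (if X = v then 1 else 0)) * (1 + complex_of_real t * (if Y = v then 1 else 0))
       * (A (fst X) (fst Y) * B (snd Y) (snd X)))"
proof -
  obtain v1 v2 where v: "v = (v1, v2)" by (cases v)
  have v1: "v1 < p" and v2: "v2 < q" using vG v unfolding grid_def by auto
  define a1 where "a1 = (\<Sum>i<p. \<Sum>j<p. A i j)"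
  define gA where "gA = (\<Sum>j<p. A v1 j)"
  define b1 where "b1 = (\<Sum>i<q. \<Sum>j<q. B i j)"
  define gB where "gB = (\<Sum>j<q. B v2 j)"
  note csA = dens_cs[OF DA v1, folded a1_def gA_def]
  note csB = dens_cs[OF DB v2, folded b1_def gB_def]
  have S1: "(\<Sum>X\<in>grid p q. \<Sum>Y\<in>grid p q. A (fst X) (fst Y) * B (snd Y) (snd X)) = a1 * b1"
  proof -
    have "(\<Sum>X\<in>grid p q. \<Sum>Y\<in>grid p q. A (fst X) (fst Y) * B (snd Y) (snd X))
        = (\<Sum>X\<in>grid p q. (\<Sum>i<p. A (fst X) i) * (\<Sum>j<q. B j (snd X)))"
      by (rule sum.cong[OF refl]) (rule prod_sum_grid)
    also have "\<dots> = (\<Sum>i<p. \<Sum>j<p. A i j) * (\<Sum>i<q. \<Sum>j<q. B j i)"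
      by (rule prod_sum_grid)
    also have "(\<Sum>i<q. \<Sum>j<q. B j i) = b1" unfolding b1_def by (rule sum.swap)
    finally show ?thesis unfolding a1_def .
  qed
  have S2: "(\<Sum>X\<in>grid p q. A (fst X) (fst v) * B (snd v) (snd X)) = cnj gA * gB"
    unfolding v using prod_sum_grid[of "\<lambda>i. A i v1" "\<lambda>j. B v2 j"] csA(1) gB_def by simp
  have S3: "(\<Sum>Y\<in>grid p q. A (fst v) (fst Y) * B (snd Y) (snd v)) = gA * cnj gB"
    unfolding v using prod_sum_grid[of "\<lambda>i. A v1 i" "\<lambda>j. B j v2"] csB(1) gA_def by simp
  have "(\<Sum>X\<in>grid p q. \<Sum>Y\<in>grid p q.
     (1 + complex_of_real t * (if X = v then 1 else 0)) * (1 + complex_of_real t * (if Y = v then 1 else 0))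
       * (A (fst X) (fst Y) * B (snd Y) (snd X)))
     = 1 * 1 * (a1 * b1) + 1 * complex_of_real t * (cnj gA * gB) + complex_of_real t * 1 * (gA * cnj gB)
       + complex_of_real t * complex_of_real t * (A v1 v1 * B v2 v2)"
    unfolding quad_expand[OF finite_grid vG] S1 S2 S3 by (simp add: v)
  also have "Re \<dots> = Re a1 * Re b1 + 2 * t * (Re gA * Re gB + Im gA * Im gB) + t^2 * (Re (A v1 v1) * Re (B v2 v2))"
    using csA(2,3) csB(2,3) by (simp add: algebra_simps power2_eq_square)
  finally show ?thesis
    by (simp only:) (rule final_ineq; use csA csB in simp)
qed

lemma sum_if_card_c:
  "finite S \<Longrightarrow> (\<Sum>x\<in>S. if P x then 1 else (0::complex)) = of_nat (card {x\<in>S. P x})"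
  by (simp add: sum.inter_filter[symmetric])

lemma nbrs_grid:
  assumes sg: "simple_graph_on (grid p q) E"
  shows "{Y \<in> grid p q. {X, Y} \<in> E} = {Y. {X, Y} \<in> E}"
  using edge_in_grid(2)[OF sg] by blast

lemma ptnbrs_grid:
  assumes sg: "simple_graph_on (grid p q) E"
  shows "{Y \<in> grid p q. {v, Y} \<in> ptrans_B E} = {Y. {v, Y} \<in> ptrans_B E}"
proof -
  have "Y \<in> grid p q" if "{v, Y} \<in> ptrans_B E" for Y
  proof -
    have "{(fst v, snd Y), (fst Y, snd v)} \<in> E" using that mem_ptrans by blast
    then have "(fst v, snd Y) \<in> grid p q" "(fst Y, snd v) \<in> grid p q"
      using edge_in_grid[OF sg] by blast+
    then show ?thesis unfolding grid_def by (cases Y) auto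
  qed
  then show ?thesis by blast
qed

lemma lap_row:
  assumes sg: "simple_graph_on (grid p q) E" and X: "X \<in> grid p q"
  shows "(\<Sum>Y\<in>grid p q. laplacian E X Y) = 0"
proof -
  have "(\<Sum>Y\<in>grid p q. laplacian E X Y) = (\<Sum>Y\<in>grid p q. if X = Y then of_nat (degree E X) else 0)
       - (\<Sum>Y\<in>grid p q. if {X, Y} \<in> E then 1 else 0)"
    unfolding laplacian_def degree_matrix_def adj_matrix_def sum_subtractf by simp
  also have "\<dots> = of_nat (degree E X) - of_nat (degree E X)"
    using X by (simp add: sum_if_card_c finite_grid nbrs_grid[OF sg] degree_def)
  finally show ?thesis by simp
qed

lemma sum_swap_grid:
  fixes f :: "vertex \<Rightarrow> vertex \<Rightarrow> complex"
  shows "(\<Sum>X\<in>grid p q. \<Sum>Y\<in>grid p q. f (fst X, snd Y) (fst Y, snd X)) = (\<Sum>X\<in>grid p q. \<Sum>Y\<in>grid p q. f X Y)"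
proof -
  define \<tau> where "\<tau> XY = ((fst (fst XY), snd (snd XY)), (fst (snd XY), snd (fst XY)))" for XY :: "vertex \<times> vertex"
  have h: "\<tau> (\<tau> XY) = XY" "\<tau> XY \<in> grid p q \<times> grid p q" if "XY \<in> grid p q \<times> grid p q" for XY
    using that unfolding \<tau>_def grid_def by auto
  have "(\<Sum>XY\<in>grid p q \<times> grid p q. f (fst (fst XY), snd (snd XY)) (fst (snd XY), snd (fst XY)))
      = (\<Sum>XY\<in>grid p q \<times> grid p q. f (fst XY) (snd XY))"
    by (rule sum.reindex_bij_witness[of _ \<tau> \<tau>]) (use h in \<open>auto simp: \<tau>_def\<close>)
  then show ?thesis by (simp add: sum.cartesian_product case_prod_unfold)
qed

lemma lap_sums:
  assumes sg: "simple_graph_on (grid p q) E" and vG: "v \<in> grid p q"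
  shows "(\<Sum>X\<in>grid p q. \<Sum>Y\<in>grid p q. laplacian E (fst X, snd Y) (fst Y, snd X)) = 0"
    and "(\<Sum>X\<in>grid p q. laplacian E (fst X, snd v) (fst v, snd X)) = of_nat (degree E v) - of_nat (degree (ptrans_B E) v)"
    and "(\<Sum>Y\<in>grid p q. laplacian E (fst v, snd Y) (fst Y, snd v)) = of_nat (degree E v) - of_nat (degree (ptrans_B E) v)"
    and "laplacian E v v = of_nat (degree E v)"
proof -
  show "(\<Sum>X\<in>grid p q. \<Sum>Y\<in>grid p q. laplacian E (fst X, snd Y) (fst Y, snd X)) = 0"
    unfolding sum_swap_grid by (simp add: lap_row[OF sg])
  have dm: "((a, snd v) = (fst v, b)) \<longleftrightarrow> (a, b) = v" for a b by (cases v) auto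
  have "(\<Sum>X\<in>grid p q. laplacian E (fst X, snd v) (fst v, snd X))
      = (\<Sum>X\<in>grid p q. if X = v then of_nat (degree E v) else 0)
       - (\<Sum>X\<in>grid p q. if {v, X} \<in> ptrans_B E then 1 else 0)"
    unfolding laplacian_def degree_matrix_def adj_matrix_def sum_subtractf mem_ptrans
    by (intro arg_cong2[where f="(-)"] sum.cong refl) (auto simp: dm insert_commute)
  also have "\<dots> = of_nat (degree E v) - of_nat (degree (ptrans_B E) v)"
    using vG by (simp add: sum_if_card_c finite_grid ptnbrs_grid[OF sg] degree_def)
  finally show "(\<Sum>X\<in>grid p q. laplacian E (fst X, snd v) (fst v, snd X)) = of_nat (degree E v) - of_nat (degree (ptrans_B E) v)" .
  have dm2: "((fst v, b) = (a, snd v)) \<longleftrightarrow> (a, b) = v" for a b by (cases v) auto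
  have "(\<Sum>Y\<in>grid p q. laplacian E (fst v, snd Y) (fst Y, snd v))
      = (\<Sum>Y\<in>grid p q. if Y = v then of_nat (degree E v) else 0)
       - (\<Sum>Y\<in>grid p q. if {v, Y} \<in> ptrans_B E then 1 else 0)"
    unfolding laplacian_def degree_matrix_def adj_matrix_def sum_subtractf mem_ptrans
    by (intro arg_cong2[where f="(-)"] sum.cong refl) (auto simp: dm2)
  also have "\<dots> = of_nat (degree E v) - of_nat (degree (ptrans_B E) v)"
    using vG by (simp add: sum_if_card_c finite_grid ptnbrs_grid[OF sg] degree_def)
  finally show "(\<Sum>Y\<in>grid p q. laplacian E (fst v, snd Y) (fst Y, snd v)) = of_nat (degree E v) - of_nat (degree (ptrans_B E) v)" .
  have "{v, v} \<notin> E" using edge_in_grid(3)[OF sg] by blast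
  then show "laplacian E v v = of_nat (degree E v)"
    by (simp add: laplacian_def degree_matrix_def adj_matrix_def)
qed



lemma sum_swap3:
  fixes f :: "nat \<Rightarrow> 'a \<Rightarrow> 'a \<Rightarrow> complex"
  shows "(\<Sum>X\<in>S. \<Sum>Y\<in>S. \<Sum>k<m. f k X Y) = (\<Sum>k<m. \<Sum>X\<in>S. \<Sum>Y\<in>S. f k X Y)"
proof -
  have "(\<Sum>X\<in>S. \<Sum>Y\<in>S. \<Sum>k<m. f k X Y) = (\<Sum>X\<in>S. \<Sum>k<m. \<Sum>Y\<in>S. f k X Y)"
    by (rule sum.cong[OF refl]) (rule sum.swap)
  also have "\<dots> = (\<Sum>k<m. \<Sum>X\<in>S. \<Sum>Y\<in>S. f k X Y)" by (rule sum.swap)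
  finally show ?thesis .
qed

lemma deg_of_sep:
  assumes sg: "simple_graph_on (grid p q) E" and ne: "E \<noteq> {}"
    and sep: "separable p q (rho E)" and vG: "v \<in> grid p q"
  shows "degree E v = degree (ptrans_B E) v"
proof (rule ccontr)
  assume neq: "degree E v \<noteq> degree (ptrans_B E) v"
  obtain m :: nat and w A B where
    h1: "\<forall>k<m. 0 \<le> w k \<and> density_matrix p (A k) \<and> density_matrix q (B k)" and
    h3: "\<forall>i<p. \<forall>j<q. \<forall>i'<p. \<forall>j'<q.
           rho E (i, j) (i', j') = (\<Sum>k<m. complex_of_real (w k) * A k i i' * B k j j')"
    using sep unfolding separable_def by blast
  define G where "G = grid p q"
  define d where "d = real (degree E v)"
  define d' where "d' = real (degree (ptrans_B E) v)"
  define D where "D = d - d'"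
  define t where "t = - D / (d + 1)"
  define z where "z X = 1 + complex_of_real t * (if X = v then 1 else 0)" for X
  have cE: "card E > 0" using finite_E[OF sg] ne by (simp add: card_gt_0_iff)
  have D0: "D \<noteq> 0" using neq unfolding D_def d_def d'_def by simp
  have d0: "0 \<le> d" unfolding d_def by simp
  define Q where "Q = (\<Sum>X\<in>G. \<Sum>Y\<in>G. z X * z Y * rho E (fst X, snd Y) (fst Y, snd X))"
  have rhoeq: "rho E (fst X, snd Y) (fst Y, snd X) = (\<Sum>k<m. complex_of_real (w k) * A k (fst X) (fst Y) * B k (snd Y) (snd X))"
    if "X \<in> G" "Y \<in> G" for X Y
    using h3 that unfolding G_def grid_def by auto
  have "Q = (\<Sum>X\<in>G. \<Sum>Y\<in>G. \<Sum>k<m. complex_of_real (w k) * (z X * z Y * (A k (fst X) (fst Y) * B k (snd Y) (snd X))))"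
    unfolding Q_def
    by (intro sum.cong refl) (simp add: rhoeq sum_distrib_left mult_ac)
  also have "\<dots> = (\<Sum>k<m. complex_of_real (w k) * (\<Sum>X\<in>G. \<Sum>Y\<in>G. z X * z Y * (A k (fst X) (fst Y) * B k (snd Y) (snd X))))"
    unfolding sum_swap3 by (simp add: sum_distrib_left)
  finally have Qk: "Q = \<dots>" .
  have ReQ: "0 \<le> Re Q"
    unfolding Qk Re_sum
  proof (rule sum_nonneg)
    fix k assume "k \<in> {..<m}"
    then have k: "0 \<le> w k" "density_matrix p (A k)" "density_matrix q (B k)" using h1 by auto
    have "0 \<le> Re (\<Sum>X\<in>G. \<Sum>Y\<in>G. z X * z Y * (A k (fst X) (fst Y) * B k (snd Y) (snd X)))"
      unfolding z_def G_def by (rule prod_psd[OF k(2) k(3) vG])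
    then show "0 \<le> Re (complex_of_real (w k) * (\<Sum>X\<in>G. \<Sum>Y\<in>G. z X * z Y * (A k (fst X) (fst Y) * B k (snd Y) (snd X))))"
      using k(1) by simp
  qed
  have Qv: "Q = complex_of_real ((2 * t * D + t^2 * d) / (2 * real (card E)))"
  proof -
    have "Q = (\<Sum>X\<in>G. \<Sum>Y\<in>G. z X * z Y * laplacian E (fst X, snd Y) (fst Y, snd X)) / of_nat (2 * card E)"
      unfolding Q_def rho_def by (simp add: sum_divide_distrib)
    also have "(\<Sum>X\<in>G. \<Sum>Y\<in>G. z X * z Y * laplacian E (fst X, snd Y) (fst Y, snd X))
        = 1 * 1 * 0 + 1 * complex_of_real t * (of_nat (degree E v) - of_nat (degree (ptrans_B E) v))
          + complex_of_real t * 1 * (of_nat (degree E v) - of_nat (degree (ptrans_B E) v))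
          + complex_of_real t * complex_of_real t * of_nat (degree E v)"
      unfolding z_def G_def quad_expand[OF finite_grid vG] lap_sums(1-3)[OF sg vG] prod.collapse lap_sums(4)[OF sg vG] by simp
    also have "\<dots> = complex_of_real (2 * t * D + t^2 * d)"
      unfolding D_def d_def d'_def by (simp add: algebra_simps power2_eq_square)
    finally show ?thesis using cE by simp
  qed
  have neg: "2 * t * D + t^2 * d < 0"
  proof -
    have td: "t * (d + 1) = - D" unfolding t_def using d0 by simp
    have "(d + 1)^2 * (2 * t * D + t^2 * d) = 2 * D * (t * (d + 1)) * (d + 1) + (t * (d + 1))^2 * d"
      by (simp add: power2_eq_square algebra_simps)
    also have "\<dots> = - (D^2 * (d + 2))" unfolding td by (simp add: power2_eq_square algebra_simps)
    finally have "(d + 1)^2 * (2 * t * D + t^2 * d) = - (D^2 * (d + 2))" .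
    moreover have "D^2 * (d + 2) > 0" using D0 d0 by simp
    moreover have "(d + 1)^2 > 0" using d0 by simp
    ultimately show ?thesis
    proof -
      assume e: "(d + 1)^2 * (2 * t * D + t^2 * d) = - (D^2 * (d + 2))"
        and p1: "D^2 * (d + 2) > 0" and p2: "(d + 1)^2 > 0"
      show ?thesis
      proof (rule ccontr)
        assume "\<not> 2 * t * D + t^2 * d < 0"
        then have "0 \<le> 2 * t * D + t^2 * d" by simp
        then have "0 \<le> (d + 1)^2 * (2 * t * D + t^2 * d)" using p2 by simp
        then show False using e p1 by linarith
      qed
    qed
  qed
  have "0 \<le> (2 * t * D + t^2 * d) / (2 * real (card E))" using ReQ unfolding Qv by simp
  moreover have "(2 * t * D + t^2 * d) / (2 * real (card E)) < 0"
    using neg cE by (simp add: divide_neg_pos)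
  ultimately show False by simp
qed

theorem theorem3:
  fixes p q :: nat and E :: "vertex set set"
  assumes "nearest_point_graph p q E"
    and "E \<noteq> {}"
  shows "separable p q (rho E) \<longleftrightarrow>
         degree_matrix E = degree_matrix (ptrans_B E)"
proof -
  have sg: "simple_graph_on (grid p q) E" using assms(1) unfolding nearest_point_graph_def by blast
  have out: "degree E v = 0 \<and> degree (ptrans_B E) v = 0" if "v \<notin> grid p q" for v
  proof -
    have "{w. {v, w} \<in> E} = {}" using edge_in_grid(1)[OF sg] that by blast
    moreover have "{w. {v, w} \<in> ptrans_B E} = {}"
    proof -
      have "{Y \<in> grid p q. {v, Y} \<in> ptrans_B E} = {Y. {v, Y} \<in> ptrans_B E}" by (rule ptnbrs_grid[OF sg])
      have "False" if "{v, w} \<in> ptrans_B E" for w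
      proof -
        have "{(fst v, snd w), (fst w, snd v)} \<in> E" using that mem_ptrans by blast
        then have "(fst v, snd w) \<in> grid p q" "(fst w, snd v) \<in> grid p q"
          using edge_in_grid[OF sg] by blast+
        then have "v \<in> grid p q" unfolding grid_def by (cases v) auto
        then show False using \<open>v \<notin> grid p q\<close> by simp
      qed
      then show ?thesis by blast
    qed
    ultimately show ?thesis unfolding degree_def by (simp only: card.empty)
  qed
  have deq_iff: "degree_matrix E = degree_matrix (ptrans_B E) \<longleftrightarrow> (\<forall>v. degree E v = degree (ptrans_B E) v)"
  proof
    assume h: "degree_matrix E = degree_matrix (ptrans_B E)"
    show "\<forall>v. degree E v = degree (ptrans_B E) v"
    proof
      fix v
      have "degree_matrix E v v = degree_matrix (ptrans_B E) v v" using h by simp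
      then show "degree E v = degree (ptrans_B E) v" unfolding degree_matrix_def by simp
    qed
  next
    assume a: "\<forall>v. degree E v = degree (ptrans_B E) v"
    show "degree_matrix E = degree_matrix (ptrans_B E)"
      unfolding degree_matrix_def by (intro ext) (simp add: a[rule_format])
  qed
  show ?thesis
  proof
    assume sep: "separable p q (rho E)"
    have "\<forall>v. degree E v = degree (ptrans_B E) v"
    proof
      fix v show "degree E v = degree (ptrans_B E) v"
        using deg_of_sep[OF sg assms(2) sep] out by (cases "v \<in> grid p q") auto
    qed
    then show "degree_matrix E = degree_matrix (ptrans_B E)" using deq_iff by blast
  next
    assume "degree_matrix E = degree_matrix (ptrans_B E)"
    then have deq: "\<And>v. degree E v = degree (ptrans_B E) v" using deq_iff by blast
    show "separable p q (rho E)"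
      by (rule sep_of_PT[OF sg assms(2)]) (rule degree_eq_imp_PT[OF assms(1) deq])
  qed
qed

end
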